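(* Let $\epsilon\le 1/10$ and consider the multi-value algorithm against a late $\epsilon$-bounded adaptive blocking adversary. There are constants $\rho\in(0,1)$ and $\alpha>0$ such that, for any iteration $t$ with $r=\sigma_{t-1}/n<\rho$, with high probability $\sigma_t\ge\max\{(1+\alpha)\sigma_{t-1},\Theta(\log n)\}$.
   Context: Model: $n$ anonymous nodes, fully interconnected, synchronous rounds; in each round every node first receives the non-blocked messages sent to it in the previous round, computes, then sends messages. Late $\epsilon$-bounded adaptive adversary: at the start of each round $t\ge2$ it knows the full system state at the beginning of round $t-1$ and blocks a set $B_t$ of at most $\epsilon n$ nodes in round $t$ (blocked nodes neither send nor receive in that round); in round 1 it knows the initial state but not that round's coin flips. W.h.p. means with probability at least $1-n^{-\Omega(1)}$. Multi-value algorithm (constants $c_1,c_2,c_3>0$; inputs from a domain of size polynomial in $n$; $\bot\le x$ for all $x$): (1) every node $u$ initializes $x_u$ to its input and becomes active with probability $c_1\log n/n$; (2) each active node sends $x_u$ to $\lceil c_2\log n\rceil$ nodes chosen uniformly at random; (3) every inactive or blocked node $v$ sets $x_v=\bot$; (4) for iterations $t=1,\dots,\lceil c_3\log n\rceil$, every node $v$ sets $x_v=\max(R\cup\{x_v\})$ with $R$ the set of newly received values, becomes active if $x_v\neq\bot$, and, if $t<c_3\log n$ and $v$ is active, sends $x_v$ to $2$ nodes chosen uniformly at random; (5) every node decides on $x_u$. Let $A$ be the set of nodes active in round 1 and $B_1$ those blocked in round 1; $x^*$ is the maximum input among nodes in $A\setminus B_1$; $\sigma_t$ is the number of nodes whose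 value is $x^*$ at the end of iteration $t$. *)

theory Defs
  imports "HOL-Probability.Probability" "HOL-Library.Multiset"
begin

text \<open>Nodes are 0..n-1 (indices are for modelling only). A node value is
  nat option; None plays the role of bot, which is below every value.
  A global state (at the beginning of a round) is the vector of node values
  together with the multiset of in-flight messages (target, value) sent in the
  previous round.\<close>

type_synonym vals = "nat \<Rightarrow> nat option"
type_synonym gstate = "vals \<times> (nat \<times> nat) multiset"

text \<open>A deterministic adaptive adversary: for round s it gets the history of
  global states at the beginning of rounds 1..s-1 (for s = 1: the initial
  state) and returns the set of nodes blocked in round s.\<close>
type_synonym adversary = "nat \<Rightarrow> gstate list \<Rightarrow> nat set"

definition adv_ok :: "nat \<Rightarrow> real \<Rightarrow> adversary \<Rightarrow> bool" where
  "adv_ok n \<epsilon> adv \<longleftrightarrow>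
     (\<forall>s h. adv s h \<subseteq> {..<n} \<and> real (card (adv s h)) \<le> \<epsilon> * real n)"

definition omax :: "nat option \<Rightarrow> nat option \<Rightarrow> nat option" where
  "omax a b = (case a of None \<Rightarrow> b
                 | Some x \<Rightarrow> (case b of None \<Rightarrow> Some x | Some y \<Rightarrow> Some (max x y)))"

definition unif_targets :: "nat \<Rightarrow> nat \<Rightarrow> (nat \<times> nat \<Rightarrow> nat) pmf" where
  "unif_targets n k = Pi_pmf ({..<n} \<times> {..<k}) 0 (\<lambda>_. pmf_of_set {..<n})"

definition init_state :: "nat \<Rightarrow> (nat \<Rightarrow> nat) \<Rightarrow> gstate" where
  "init_state n inp = ((\<lambda>v. if v < n then Some (inp v) else None), {#})"

text \<open>Round 1: steps (1)-(3). B is the set blocked in round 1.\<close>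
definition round1 :: "nat \<Rightarrow> real \<Rightarrow> real \<Rightarrow> (nat \<Rightarrow> nat) \<Rightarrow> nat set \<Rightarrow> gstate pmf" where
  "round1 n c1 c2 inp B =
     bind_pmf (Pi_pmf {..<n} False (\<lambda>_. bernoulli_pmf (c1 * ln (real n) / real n))) (\<lambda>coin.
     map_pmf (\<lambda>tg.
       ((\<lambda>v. if v < n \<and> coin v \<and> v \<notin> B then Some (inp v) else None),
        image_mset (\<lambda>(u, j). (tg (u, j), inp u))
          (filter_mset (\<lambda>(u, j). coin u \<and> u \<notin> B)
             (mset_set ({..<n} \<times> {..<nat \<lceil>c2 * ln (real n)\<rceil>})))))
       (unif_targets n (nat \<lceil>c2 * ln (real n)\<rceil>)))"

definition received :: "(nat \<times> nat) multiset \<Rightarrow> nat \<Rightarrow> nat set" where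
  "received M v = {a. (v, a) \<in># M}"

definition update :: "nat set \<Rightarrow> gstate \<Rightarrow> vals" where
  "update B st v =
     (if v \<notin> B \<and> received (snd st) v \<noteq> {}
      then omax (fst st v) (Some (Max (received (snd st) v))) else fst st v)"

text \<open>Iteration t (executed in round t+1) with blocked set B, from the state st
  at the beginning of that round.\<close>
definition iter_round :: "nat \<Rightarrow> real \<Rightarrow> nat \<Rightarrow> nat set \<Rightarrow> gstate \<Rightarrow> gstate pmf" where
  "iter_round n c3 t B st =
     map_pmf (\<lambda>tg.
       (update B st,
        image_mset (\<lambda>(v, j). (tg (v, j), the (update B st v)))
          (filter_mset (\<lambda>(v, j). v < n \<and> update B st v \<noteq> None \<and> v \<notin> B
                                  \<and> real t < c3 * ln (real n))
             (mset_set ({..<n} \<times> {..<2::nat})))))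
       (unif_targets n 2)"

text \<open>exec ... m : distribution of the list of global states at the beginning
  of rounds 1..m+1 (so index i holds the state after round i; index t+1 is the
  state at the end of iteration t, index 1 the state after step (3)).\<close>
primrec exec :: "nat \<Rightarrow> real \<Rightarrow> real \<Rightarrow> real \<Rightarrow> (nat \<Rightarrow> nat) \<Rightarrow> adversary \<Rightarrow> nat
                 \<Rightarrow> gstate list pmf" where
  "exec n c1 c2 c3 inp adv 0 = return_pmf [init_state n inp]"
| "exec n c1 c2 c3 inp adv (Suc m) =
     bind_pmf (exec n c1 c2 c3 inp adv m) (\<lambda>h.
       map_pmf (\<lambda>st. h @ [st])
         (if m = 0 then round1 n c1 c2 inp (adv 1 h)
          else iter_round n c3 m (adv (Suc m) (butlast h)) (last h)))"

text \<open>x* = maximum input among A minus B_1 (= nodes with a non-bot value after step 3).\<close>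
definition x_star :: "nat \<Rightarrow> gstate list \<Rightarrow> nat" where
  "x_star n h = Max {a. \<exists>v<n. fst (h ! 1) v = Some a}"

definition sigma :: "nat \<Rightarrow> gstate list \<Rightarrow> nat \<Rightarrow> nat" where
  "sigma n h t = card {v. v < n \<and> fst (h ! (t + 1)) v = Some (x_star n h)}"

end

theory Submission
  imports Defs
begin

lemma prob_bind_le:
  assumes "\<And>x. x \<in> set_pmf p \<Longrightarrow> measure_pmf.prob (f x) A \<le> r"
  shows "measure_pmf.prob (bind_pmf p f) A \<le> r"
proof -
  have r: "0 \<le> r" using assms[of "SOME x. x \<in> set_pmf p"] set_pmf_not_empty
    by (metis measure_nonneg order_trans some_in_eq)
  have "emeasure (measure_pmf (bind_pmf p f)) A = (\<integral>\<^sup>+x. emeasure (f x) A \<partial>p)" by simp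
  also have "\<dots> \<le> (\<integral>\<^sup>+x. ennreal r \<partial>p)"
    by (intro nn_integral_mono_AE) (auto simp: AE_measure_pmf_iff measure_pmf.emeasure_eq_measure intro!: ennreal_leI assms)
  also have "\<dots> = ennreal r" by simp
  finally show ?thesis using r by (simp add: measure_pmf.emeasure_eq_measure)
qed

lemma prob_bind_le2:
  assumes "\<And>x. x \<in> set_pmf p \<Longrightarrow> x \<notin> C \<Longrightarrow> measure_pmf.prob (f x) A \<le> r" "0 \<le> r"
  shows "measure_pmf.prob (bind_pmf p f) A \<le> measure_pmf.prob p C + r"
proof -
  have "emeasure (measure_pmf (bind_pmf p f)) A = (\<integral>\<^sup>+x. emeasure (f x) A \<partial>p)" by simp
  also have "\<dots> \<le> (\<integral>\<^sup>+x. (indicator C x + ennreal r) \<partial>p)"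
  proof (intro nn_integral_mono_AE, unfold AE_measure_pmf_iff, intro ballI)
    fix x assume x: "x \<in> set_pmf p"
    show "emeasure (measure_pmf (f x)) A \<le> indicator C x + ennreal r"
    proof (cases "x \<in> C")
      case True
      then show ?thesis by (simp add: measure_pmf.emeasure_le_1 add_increasing2)
    next
      case False
      then show ?thesis using assms(1)[OF x False]
        by (simp add: measure_pmf.emeasure_eq_measure ennreal_leI)
    qed
  qed
  also have "\<dots> = emeasure p C + ennreal r"
    by (subst nn_integral_add) auto
  also have "\<dots> = ennreal (measure_pmf.prob p C + r)"
    using assms(2) by (simp add: measure_pmf.emeasure_eq_measure ennreal_plus)
  finally show ?thesis using assms(2)
    by (simp add: measure_pmf.emeasure_eq_measure ennreal_le_iff[symmetric] del: ennreal_le_iff)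
qed

lemma prob_indep_fail:
  fixes I J G :: "'i set" and Bad :: "nat set"
  assumes I: "finite I" and GJ: "G \<subseteq> J" and JI: "J \<subseteq> I" and n: "n > 0"
    and Bad: "finite Bad" "card Bad \<le> b"
  shows "measure_pmf.prob (Pi_pmf I 0 (\<lambda>_. pmf_of_set {..<n}))
            {tg. \<forall>i\<in>J - G. tg i \<in> Bad \<union> tg ` G}
         \<le> ((real b + card G) / n) ^ card (J - G)"
proof -
  have fG: "finite G" using GJ JI I by (meson finite_subset)
  have IU: "G \<union> (I - G) = I" using GJ JI by blast
  define P where "P = pair_pmf (Pi_pmf G 0 (\<lambda>_. pmf_of_set {..<n})) (Pi_pmf (I - G) 0 (\<lambda>_. pmf_of_set {..<n}))"
  have eq0: "Pi_pmf (G \<union> (I - G)) 0 (\<lambda>_. pmf_of_set {..<n}) = map_pmf (\<lambda>(f,g) x. if x \<in> G then f x else g x) P"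
      unfolding P_def using I fG by (intro Pi_pmf_union) auto
  have eq: "Pi_pmf I 0 (\<lambda>_. pmf_of_set {..<n}) = map_pmf (\<lambda>(f,g) x. if x \<in> G then f x else g x) P"
    using eq0 unfolding IU .
  let ?E = "{tg. \<forall>i\<in>J - G. tg i \<in> Bad \<union> tg ` G}"
  have "measure_pmf.prob (Pi_pmf I 0 (\<lambda>_. pmf_of_set {..<n})) ?E
      = measure_pmf.prob P ((\<lambda>(f,g) x. if x \<in> G then f x else g x) -` ?E)"
    by (simp add: eq)
  also have "(\<lambda>(f,g) x. if x \<in> G then f x else g x) -` ?E = {(f,g). \<forall>i\<in>J - G. g i \<in> Bad \<union> f ` G}"
  proof -
    have "\<And>f g. (\<lambda>x. if x \<in> G then f x else g x) ` G = f ` G" by auto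
    then show ?thesis by (auto simp: vimage_def)
  qed
  also have "measure_pmf.prob P {(f,g). \<forall>i\<in>J - G. g i \<in> Bad \<union> f ` G} \<le> ((real b + card G) / n) ^ card (J - G)"
    unfolding P_def pair_pmf_def
  proof (rule prob_bind_le)
    fix f
    let ?S = "Bad \<union> f ` G"
    have c1: "card ?S \<le> card Bad + card (f ` G)" by (rule card_Un_le)
    have c2: "card (f ` G) \<le> card G" by (rule card_image_le[OF fG])
    have c3: "card (?S \<inter> {..<n}) \<le> card ?S" by (rule card_mono) (use Bad fG in auto)
    have cS: "card (?S \<inter> {..<n}) \<le> b + card G" using c1 c2 c3 Bad by linarith
    have "measure_pmf.prob (Pi_pmf (I - G) 0 (\<lambda>_. pmf_of_set {..<n}) \<bind> (\<lambda>y. return_pmf (f, y)))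
          {(f, g). \<forall>i\<in>J - G. g i \<in> Bad \<union> f ` G}
        = measure_pmf.prob (Pi_pmf (I - G) 0 (\<lambda>_. pmf_of_set {..<n})) {g. \<forall>i\<in>J - G. g i \<in> ?S}"
      by (simp add: bind_return_pmf' map_pmf_def[symmetric] vimage_def)
    also have "{g. \<forall>i\<in>J - G. g i \<in> ?S} = Pi (I - G) (\<lambda>i. if i \<in> J - G then ?S else UNIV)"
      using JI by (auto simp: Pi_def)
    also have "measure_pmf.prob (Pi_pmf (I - G) 0 (\<lambda>_. pmf_of_set {..<n})) \<dots>
       = (\<Prod>i\<in>I - G. measure_pmf.prob (pmf_of_set {..<n}) (if i \<in> J - G then ?S else UNIV))"
      by (rule measure_Pi_pmf_Pi) (use I in auto)
    also have "\<dots> = (\<Prod>i\<in>J - G. measure_pmf.prob (pmf_of_set {..<n}) ?S)"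
      using JI I by (intro prod.mono_neutral_cong_right) auto
    also have "\<dots> = (real (card (?S \<inter> {..<n})) / n) ^ card (J - G)"
      using n by (subst measure_pmf_of_set) (auto simp: Int_commute)
    also have "\<dots> \<le> ((real b + card G) / n) ^ card (J - G)"
      using cS n by (intro power_mono divide_right_mono) auto
    finally show "measure_pmf.prob (Pi_pmf (I - G) 0 (\<lambda>_. pmf_of_set {..<n}) \<bind> (\<lambda>y. return_pmf (f, y)))
          {(f, g). \<forall>i\<in>J - G. g i \<in> Bad \<union> f ` G} \<le> ((real b + card G) / n) ^ card (J - G)" .
  qed
  finally show ?thesis .
qed

lemma few_distinct:
  fixes I J :: "'i set" and Bad :: "nat set"
  assumes I: "finite I" and JI: "J \<subseteq> I" and n: "n > 0"
    and Bad: "finite Bad" "card Bad \<le> b"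
    and small: "real b + 3/5 * card J \<le> real n / 8"
  shows "measure_pmf.prob (Pi_pmf I 0 (\<lambda>_. pmf_of_set {..<n}))
            {tg. real (card (tg ` J - Bad)) < 3/5 * card J}
         \<le> (2 powr (-1/5)) ^ card J"
proof -
  let ?p = "Pi_pmf I 0 (\<lambda>_. pmf_of_set {..<n})"
  have fJ: "finite J" by (rule finite_subset[OF JI I])
  define \<G> where "\<G> = {G. G \<subseteq> J \<and> real (card G) < 3/5 * card J}"
  define A where "A = (\<lambda>G. {tg::'i\<Rightarrow>nat. \<forall>i\<in>J - G. tg i \<in> Bad \<union> tg ` G})"
  have fG: "finite \<G>" by (rule finite_subset[of _ "Pow J"]) (use fJ in \<open>auto simp: \<G>_def\<close>)
  have cG: "card \<G> \<le> 2 ^ card J"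
  proof -
    have "card \<G> \<le> card (Pow J)" unfolding \<G>_def using fJ by (intro card_mono) auto
    then show ?thesis using card_Pow[OF fJ] by simp
  qed
  have sub: "{tg. real (card (tg ` J - Bad)) < 3/5 * card J} \<subseteq> (\<Union>G\<in>\<G>. A G)"
  proof
    fix tg assume tg: "tg \<in> {tg. real (card (tg ` J - Bad)) < 3/5 * card J}"
    define G where "G = (\<lambda>y. SOME i. i \<in> J \<and> tg i = y) ` (tg ` J - Bad)"
    have some: "\<And>y. y \<in> tg ` J - Bad \<Longrightarrow> (SOME i. i \<in> J \<and> tg i = y) \<in> J \<and> tg (SOME i. i \<in> J \<and> tg i = y) = y"
      by (rule someI_ex) blast
    have GJ: "G \<subseteq> J" unfolding G_def using some by blast
    have "card G \<le> card (tg ` J - Bad)" unfolding G_def by (rule card_image_le) (use fJ in auto)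
    then have "G \<in> \<G>" using GJ tg unfolding \<G>_def by auto
    moreover have "tg \<in> A G"
    proof -
      have "tg ` J - Bad \<subseteq> tg ` G"
      proof
        fix y assume y: "y \<in> tg ` J - Bad"
        then have "(SOME i. i \<in> J \<and> tg i = y) \<in> G" unfolding G_def by blast
        then show "y \<in> tg ` G" using some[OF y] by force
      qed
      then show ?thesis unfolding A_def by blast
    qed
    ultimately show "tg \<in> (\<Union>G\<in>\<G>. A G)" by blast
  qed
  have each: "measure_pmf.prob ?p (A G) \<le> (1/8) powr (2/5 * card J)" if G: "G \<in> \<G>" for G
  proof -
    have GJ: "G \<subseteq> J" and cGJ: "real (card G) < 3/5 * card J" using G unfolding \<G>_def by auto
    have fGG: "finite G" by (rule finite_subset[OF GJ fJ])
    have k: "real (card (J - G)) \<ge> 2/5 * card J"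
      using card_Diff_subset[OF fGG GJ] card_mono[OF fJ GJ] cGJ by (simp add: of_nat_diff)
    have q: "(real b + card G) / n \<le> 1/8" using small cGJ n by (simp add: field_simps)
    have "measure_pmf.prob ?p (A G) \<le> ((real b + card G) / n) ^ card (J - G)"
      unfolding A_def by (rule prob_indep_fail[OF I GJ JI n Bad])
    also have "\<dots> \<le> (1/8) ^ card (J - G)"
      using q by (intro power_mono) auto
    also have "\<dots> = (1/8) powr (card (J - G))" by (simp add: powr_realpow)
    also have "\<dots> \<le> (1/8) powr (2/5 * card J)"
      using k by (intro powr_mono') auto
    finally show ?thesis .
  qed
  have "measure_pmf.prob ?p {tg. real (card (tg ` J - Bad)) < 3/5 * card J} \<le> measure_pmf.prob ?p (\<Union>G\<in>\<G>. A G)"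
    using sub by (intro measure_pmf.finite_measure_mono) auto
  also have "\<dots> \<le> (\<Sum>G\<in>\<G>. measure_pmf.prob ?p (A G))"
    by (rule measure_pmf.finite_measure_subadditive_finite) (use fG in auto)
  also have "\<dots> \<le> (\<Sum>G\<in>\<G>. (1/8) powr (2/5 * card J))"
    by (intro sum_mono each)
  also have "\<dots> = card \<G> * (1/8) powr (2/5 * card J)" by simp
  also have "\<dots> \<le> 2 ^ card J * (1/8) powr (2/5 * card J)"
    using cG by (intro mult_right_mono) auto
  also have "\<dots> = (2 powr (-1/5)) ^ card J"
  proof -
    have "(1/8::real) powr (2/5 * card J) = 2 powr (-(6/5) * card J)"
    proof -
      have h: "(1/8::real) = 2 powr (-3)" by (simp add: powr_minus powr_numeral)
      show ?thesis by (subst h) (simp add: powr_powr)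
    qed
    moreover have "(2::real) ^ card J = 2 powr (card J)" by (simp add: powr_realpow)
    moreover have "(2 powr (-1/5)) ^ card J = (2::real) powr (-1/5 * card J)"
      by (simp add: powr_realpow[symmetric] powr_powr)
    ultimately show ?thesis by (simp add: powr_add[symmetric])
  qed
  finally show ?thesis .
qed

context
  fixes n :: nat and c1 c2 c3 :: real and inp :: "nat \<Rightarrow> nat" and adv :: adversary
begin

abbreviation "XC m \<equiv> exec n c1 c2 c3 inp adv m"

lemma exec_set_Suc:
  "set_pmf (XC (Suc m)) = (\<Union>h\<in>set_pmf (XC m). (\<lambda>st. h @ [st]) ` set_pmf
      (if m = 0 then round1 n c1 c2 inp (adv 1 h)
          else iter_round n c3 m (adv (Suc m) (butlast h)) (last h)))"
  by (simp add: set_bind_pmf)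

lemma exec_length: "h \<in> set_pmf (XC m) \<Longrightarrow> length h = Suc m"
  by (induction m arbitrary: h) (auto simp: exec_set_Suc)

lemma exec_nth0: "h \<in> set_pmf (XC m) \<Longrightarrow> h ! 0 = init_state n inp"
proof (induction m arbitrary: h)
  case (Suc m)
  then obtain h' st where h': "h' \<in> set_pmf (XC m)" and h: "h = h' @ [st]"
    by (auto simp: exec_set_Suc)
  have "length h' = Suc m" using exec_length[OF h'] .
  then show ?case using Suc.IH[OF h'] h by (simp add: nth_append)
qed simp

lemma map_butlast_exec: "map_pmf butlast (XC (Suc m)) = XC m"
proof -
  have "map_pmf butlast (XC (Suc m)) = bind_pmf (XC m) (\<lambda>h. return_pmf h)"
    by (simp add: map_bind_pmf map_pmf_comp o_def map_pmf_const del: map_pmf_def)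
  then show ?thesis by (simp add: bind_return_pmf')
qed

lemma prob_exec_butlast:
  "measure_pmf.prob (XC (Suc m)) {h. P (butlast h)} = measure_pmf.prob (XC m) {h. P h}"
proof -
  have "measure_pmf.prob (XC m) {h. P h} = measure_pmf.prob (map_pmf butlast (XC (Suc m))) {h. P h}"
    by (simp only: map_butlast_exec)
  also have "\<dots> = measure_pmf.prob (XC (Suc m)) (butlast -` {h. P h})"
    by (rule measure_map_pmf)
  also have "butlast -` {h. P h} = {h. P (butlast h)}" by auto
  finally show ?thesis by simp
qed

end

definition bnd :: "nat \<Rightarrow> gstate \<Rightarrow> bool" where
  "bnd x st \<longleftrightarrow> (\<forall>v a. fst st v = Some a \<longrightarrow> a \<le> x) \<and> (\<forall>p\<in>#snd st. snd p \<le> x)"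

lemma received_finite: "finite (received M v)"
proof -
  have "received M v \<subseteq> snd ` set_mset M" unfolding received_def by force
  then show ?thesis by (rule finite_subset) auto
qed

lemma received_le: "bnd x st \<Longrightarrow> a \<in> received (snd st) v \<Longrightarrow> a \<le> x"
  unfolding bnd_def received_def by force

lemma Max_received_le: "bnd x st \<Longrightarrow> received (snd st) v \<noteq> {} \<Longrightarrow> Max (received (snd st) v) \<le> x"
  using received_finite received_le by (metis Max_in)

lemma update_le: "bnd x st \<Longrightarrow> update B st v = Some a \<Longrightarrow> a \<le> x"
  unfolding update_def omax_def
  using Max_received_le[of x st v]
  by (auto simp: bnd_def split: if_splits option.splits)

lemma update_keep: "bnd x st \<Longrightarrow> fst st v = Some x \<Longrightarrow> update B st v = Some x"
proof -
  assume b: "bnd x st" and f: "fst st v = Some x"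
  show ?thesis
  proof (cases "received (snd st) v = {}")
    case False
    then have "Max (received (snd st) v) \<le> x" using Max_received_le[OF b] by blast
    then show ?thesis using f unfolding update_def omax_def by (auto simp: max_def)
  qed (use f in \<open>simp add: update_def\<close>)
qed

lemma update_recv: "bnd x st \<Longrightarrow> v \<notin> B \<Longrightarrow> (v, x) \<in># snd st \<Longrightarrow> update B st v = Some x"
proof -
  assume b: "bnd x st" and v: "v \<notin> B" and r: "(v, x) \<in># snd st"
  have xin: "x \<in> received (snd st) v" using r unfolding received_def by simp
  then have ne: "received (snd st) v \<noteq> {}" by auto
  have "Max (received (snd st) v) = x"
    using Max_received_le[OF b ne] Max_ge[OF received_finite xin] by simp
  moreover have "\<forall>a. fst st v = Some a \<longrightarrow> a \<le> x" using b unfolding bnd_def by auto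
  ultimately show ?thesis using v ne unfolding update_def omax_def
    by (auto simp: max_def split: option.splits)
qed

lemma update_blocked: "v \<in> B \<Longrightarrow> update B st v = fst st v"
  unfolding update_def by simp

lemma set_round1:
  assumes "st \<in> set_pmf (round1 n c1 c2 inp B)"
  shows "\<exists>coin tg. tg \<in> set_pmf (unif_targets n (nat \<lceil>c2 * ln (real n)\<rceil>)) \<and> st =
       ((\<lambda>v. if v < n \<and> coin v \<and> v \<notin> B then Some (inp v) else None),
        image_mset (\<lambda>(u, j). (tg (u, j), inp u))
          (filter_mset (\<lambda>(u, j). coin u \<and> u \<notin> B)
             (mset_set ({..<n} \<times> {..<nat \<lceil>c2 * ln (real n)\<rceil>}))))"
  using assms unfolding round1_def by (auto simp: set_bind_pmf)

lemma set_iter_round: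
  assumes "st \<in> set_pmf (iter_round n c3 t B st0)"
  shows "\<exists>tg. tg \<in> set_pmf (unif_targets n 2) \<and> st =
       (update B st0,
        image_mset (\<lambda>(v, j). (tg (v, j), the (update B st0 v)))
          (filter_mset (\<lambda>(v, j). v < n \<and> update B st0 v \<noteq> None \<and> v \<notin> B
                                  \<and> real t < c3 * ln (real n))
             (mset_set ({..<n} \<times> {..<2::nat}))))"
  using assms unfolding iter_round_def by auto

lemma round1_bnd:
  assumes "st \<in> set_pmf (round1 n c1 c2 inp B)"
  shows "bnd (Max {a. \<exists>v<n. fst st v = Some a}) st"
proof -
  obtain coin tg where st: "st =
       ((\<lambda>v. if v < n \<and> coin v \<and> v \<notin> B then Some (inp v) else None),
        image_mset (\<lambda>(u, j). (tg (u, j), inp u))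
          (filter_mset (\<lambda>(u, j). coin u \<and> u \<notin> B)
             (mset_set ({..<n} \<times> {..<nat \<lceil>c2 * ln (real n)\<rceil>}))))"
    using set_round1[OF assms] by blast
  let ?X = "{a. \<exists>v<n. fst st v = Some a}"
  have fin: "finite ?X"
  proof (rule finite_subset)
    show "?X \<subseteq> inp ` {..<n}" using st by (auto split: if_splits)
  qed auto
  show ?thesis unfolding bnd_def
  proof (intro conjI allI impI ballI)
    fix v a assume "fst st v = Some a"
    then have "a \<in> ?X" using st by (auto split: if_splits)
    then show "a \<le> Max ?X" using fin by simp
  next
    fix p assume "p \<in># snd st"
    then obtain u j where "u < n" "coin u" "u \<notin> B" "snd p = inp u" using st by auto
    then have "snd p \<in> ?X" using st by auto
    then show "snd p \<le> Max ?X" using fin by simp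
  qed
qed

lemma iter_bnd:
  assumes "st \<in> set_pmf (iter_round n c3 t B st0)" "bnd x st0"
  shows "bnd x st"
proof -
  obtain tg where st: "st =
       (update B st0,
        image_mset (\<lambda>(v, j). (tg (v, j), the (update B st0 v)))
          (filter_mset (\<lambda>(v, j). v < n \<and> update B st0 v \<noteq> None \<and> v \<notin> B
                                  \<and> real t < c3 * ln (real n))
             (mset_set ({..<n} \<times> {..<2::nat}))))"
    using set_iter_round[OF assms(1)] by blast
  show ?thesis unfolding bnd_def
  proof (intro conjI allI impI ballI)
    fix v a assume "fst st v = Some a"
    then show "a \<le> x" using st update_le[OF assms(2)] by auto
  next
    fix p assume "p \<in># snd st"
    then have "\<exists>v. update B st0 v \<noteq> None \<and> snd p = the (update B st0 v)" using st by auto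
    then obtain v where "update B st0 v \<noteq> None" "snd p = the (update B st0 v)" by blast
    then show "snd p \<le> x" using update_le[OF assms(2), of B v] by auto
  qed
qed

context
  fixes n :: nat and c1 c2 c3 :: real and inp :: "nat \<Rightarrow> nat" and adv :: adversary
begin

lemma exec_bnd:
  assumes "h \<in> set_pmf (XC n c1 c2 c3 inp adv m)" "1 \<le> k" "k < length h"
  shows "bnd (x_star n h) (h ! k)"
  using assms
proof (induction m arbitrary: h k)
  case 0
  then show ?case using exec_length[OF 0(1)] by simp
next
  case (Suc m)
  then obtain h' st where h': "h' \<in> set_pmf (XC n c1 c2 c3 inp adv m)" and h: "h = h' @ [st]"
    and st: "st \<in> set_pmf (if m = 0 then round1 n c1 c2 inp (adv 1 h')
          else iter_round n c3 m (adv (Suc m) (butlast h')) (last h'))"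
    by (auto simp: exec_set_Suc)
  have lh': "length h' = Suc m" using exec_length[OF h'] .
  show ?case
  proof (cases "m = 0")
    case True
    then have k: "k = 1" using Suc.prems lh' h by simp
    have "h ! 1 = st" using h lh' True by (simp add: nth_append)
    moreover have "x_star n h = Max {a. \<exists>v<n. fst st v = Some a}"
      unfolding x_star_def using \<open>h ! 1 = st\<close> by simp
    ultimately show ?thesis using round1_bnd st True k by simp
  next
    case False
    have xs: "x_star n h = x_star n h'" unfolding x_star_def using h lh' False by (simp add: nth_append)
    show ?thesis
    proof (cases "k < length h'")
      case True
      then show ?thesis using Suc.IH[OF h' Suc.prems(2)] h xs by (simp add: nth_append)
    next
      case kk: False
      then have k: "k = Suc m" using Suc.prems lh' h by simp
      have "h' \<noteq> []" using lh' by auto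
      then have "last h' = h' ! m" using lh' by (simp add: last_conv_nth)
      then have "bnd (x_star n h') (last h')" using Suc.IH[OF h', of m] lh' False by simp
      then have "bnd (x_star n h') st" using st False by (auto intro: iter_bnd)
      then show ?thesis using k h lh' xs by (simp add: nth_append)
    qed
  qed
qed

end

definition Inv :: "nat \<Rightarrow> real \<Rightarrow> gstate list \<Rightarrow> nat \<Rightarrow> bool" where
  "Inv n L h t \<longleftrightarrow> sigma n h t \<le> 6 * (sigma n h t - sigma n h (t - 1)) \<and>
      L \<le> real (sigma n h t - sigma n h (t - 1))"

definition nonempty :: "nat \<Rightarrow> gstate list \<Rightarrow> bool" where
  "nonempty n h \<longleftrightarrow> (\<exists>v<n. fst (h ! 1) v \<noteq> None)"

lemma unif_targets_range: "tg \<in> set_pmf (unif_targets n k) \<Longrightarrow> n > 0 \<Longrightarrow> v < n \<Longrightarrow> j < k \<Longrightarrow> tg (v, j) < n"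
proof -
  assume tg: "tg \<in> set_pmf (unif_targets n k)" and n: "n > 0" and v: "v < n" and j: "j < k"
  have ne: "{..<n} \<noteq> {}" using n by auto
  show ?thesis using tg v j ne unfolding unif_targets_def by (auto simp: set_Pi_pmf PiE_dflt_def)
qed

lemma pow_bound:
  assumes "L \<le> real k" 
  shows "(2 powr (-1/5)) ^ k \<le> 2 powr (- L / 5)"
proof -
  have "(2 powr (-1/5)) ^ k = (2::real) powr (-1/5 * k)"
    by (simp add: powr_realpow[symmetric] powr_powr)
  also have "\<dots> \<le> 2 powr (- L / 5)" using assms by (intro powr_mono) auto
  finally show ?thesis .
qed

context
  fixes n :: nat and c1 c2 c3 :: real and inp :: "nat \<Rightarrow> nat" and adv :: adversary
begin

lemma step_bound:
  assumes m: "1 \<le> m" and n: "n > 0" and mc: "real m < c3 * ln (real n)"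
    and adv: "adv_ok n \<epsilon> adv" and eps: "\<epsilon> \<le> 1/10" and L: "L > 0"
  shows "measure_pmf.prob (XC n c1 c2 c3 inp adv (Suc (Suc m)))
     {h. nonempty n h \<and> real (sigma n h m) < real n / 100 \<and> Inv n L h m \<and> \<not> Inv n L h (Suc m)}
     \<le> 2 powr (- L / 5)"
proof -
  let ?E = "{h. nonempty n h \<and> real (sigma n h m) < real n / 100 \<and> Inv n L h m \<and> \<not> Inv n L h (Suc m)}"
  let ?G = "\<lambda>h. map_pmf (\<lambda>st. h @ [st]) (iter_round n c3 (Suc m) (adv (Suc (Suc m)) (butlast h)) (last h))"
  let ?F = "\<lambda>h. map_pmf (\<lambda>st. h @ [st]) (iter_round n c3 m (adv (Suc m) (butlast h)) (last h))"
  have ex: "XC n c1 c2 c3 inp adv (Suc (Suc m)) = bind_pmf (XC n c1 c2 c3 inp adv m) (\<lambda>h. bind_pmf (?F h) ?G)"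
    using m by (simp add: bind_assoc_pmf)
  show ?thesis unfolding ex
  proof (rule prob_bind_le)
    fix h'' assume h'': "h'' \<in> set_pmf (XC n c1 c2 c3 inp adv m)"
    have lh: "length h'' = Suc m" using exec_length[OF h''] .
    define B1 where "B1 = adv (Suc m) (butlast h'')"
    define st0 where "st0 = last h''"
    define vals1 where "vals1 = update B1 st0"
    define x where "x = x_star n h''"
    define msgs where "msgs = (\<lambda>tg::nat\<times>nat\<Rightarrow>nat. image_mset (\<lambda>(v, j). (tg (v, j), the (vals1 v)))
          (filter_mset (\<lambda>(v, j). v < n \<and> vals1 v \<noteq> None \<and> v \<notin> B1 \<and> real m < c3 * ln (real n))
             (mset_set ({..<n} \<times> {..<2::nat}))))"
    define B2 where "B2 = adv (Suc (Suc m)) h''"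
    define H0 where "H0 = {v. v < n \<and> fst st0 v = Some x}"
    define H1 where "H1 = {v. v < n \<and> vals1 v = Some x}"
    define S where "S = {v. v < n \<and> vals1 v = Some x \<and> v \<notin> B1}"
    define J where "J = S \<times> {..<2::nat}"
    define Bad where "Bad = H1 \<union> B2"
    define C where "C = {tg::nat\<times>nat\<Rightarrow>nat. L \<le> real (card S) \<and> real (card H1) < real n / 100 \<and>
                          real (card (tg ` J - Bad)) < 3/5 * card J}"
    have Fh: "?F h'' = map_pmf (\<lambda>tg. h'' @ [(vals1, msgs tg)]) (unif_targets n 2)"
      unfolding iter_round_def vals1_def B1_def st0_def msgs_def by (simp add: map_pmf_comp)
    have bnd0: "bnd x st0"
    proof -
      have "h'' \<noteq> []" using lh by auto
      then have "st0 = h'' ! m" unfolding st0_def using lh by (simp add: last_conv_nth)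
      then show ?thesis unfolding x_def using exec_bnd[OF h'', of m] lh m by simp
    qed
    have st1_set: "(vals1, msgs tg) \<in> set_pmf (iter_round n c3 m B1 st0)" if "tg \<in> set_pmf (unif_targets n 2)" for tg
      using that unfolding iter_round_def vals1_def msgs_def by auto
    have bnd1: "bnd x (vals1, msgs tg)" if "tg \<in> set_pmf (unif_targets n 2)" for tg
      using iter_bnd[OF st1_set[OF that] bnd0] .
    have "measure_pmf.prob (bind_pmf (?F h'') ?G) ?E \<le> measure_pmf.prob (unif_targets n 2) C + 0"
      unfolding Fh bind_map_pmf
    proof (rule prob_bind_le2)
      fix tg assume tg: "tg \<in> set_pmf (unif_targets n 2)" and tgC: "tg \<notin> C"
      show "measure_pmf.prob (?G (h'' @ [(vals1, msgs tg)])) ?E \<le> 0"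
      proof -
        have "set_pmf (?G (h'' @ [(vals1, msgs tg)])) \<inter> ?E = {}"
        proof (rule ccontr)
          assume "set_pmf (?G (h'' @ [(vals1, msgs tg)])) \<inter> ?E \<noteq> {}"
          then obtain h where hG: "h \<in> set_pmf (?G (h'' @ [(vals1, msgs tg)]))" and hE: "h \<in> ?E" by blast
          obtain st2 where h: "h = h'' @ [(vals1, msgs tg), st2]"
            and st2: "st2 \<in> set_pmf (iter_round n c3 (Suc m) B2 (vals1, msgs tg))"
            using hG unfolding B2_def by auto
          have fst2: "fst st2 = update B2 (vals1, msgs tg)"
            using set_iter_round[OF st2] by auto
          define H2 where "H2 = {v. v < n \<and> fst st2 v = Some x}"
          have xh: "x_star n h = x" unfolding x_def x_star_def h using lh m by (simp add: nth_append)
          have s0: "sigma n h (m - 1) = card H0"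
          proof -
            have "h ! m = h'' ! m" using lh unfolding h by (simp add: nth_append)
            moreover have "h'' \<noteq> []" using lh by auto
            ultimately have "h ! m = st0" unfolding st0_def using lh by (simp add: last_conv_nth)
            then show ?thesis unfolding sigma_def H0_def xh using m by simp
          qed
          have i1: "h ! Suc m = (vals1, msgs tg)" using lh unfolding h by (simp add: nth_append)
          have i2: "h ! Suc (Suc m) = st2" using lh unfolding h by (simp add: nth_append)
          have s1: "sigma n h m = card H1"
            unfolding sigma_def H1_def xh using i1 by simp
          have s2: "sigma n h (Suc m) = card H2"
            unfolding sigma_def H2_def xh using i2 by simp
          have fH1: "finite H1" unfolding H1_def by auto
          have fH0: "finite H0" unfolding H0_def by auto
          have fS: "finite S" unfolding S_def by auto
          have fH2: "finite H2" unfolding H2_def by auto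
          have H0H1: "H1 - H0 \<subseteq> S"
          proof
            fix v assume v: "v \<in> H1 - H0"
            show "v \<in> S"
            proof (cases "v \<in> B1")
              case True
              then have "vals1 v = fst st0 v" unfolding vals1_def by (rule update_blocked)
              then show ?thesis using v unfolding H0_def H1_def by auto
            next
              case False
              then show ?thesis using v unfolding H1_def S_def by auto
            qed
          qed
          have cS: "card H1 - card H0 \<le> card S"
            using diff_card_le_card_Diff[OF fH0, of H1] card_mono[OF fS H0H1] by linarith
          have H12: "H1 \<subseteq> H2"
            unfolding H1_def H2_def fst2 using update_keep[OF bnd1[OF tg]] by auto
          have new: "tg ` J - Bad \<subseteq> H2 - H1"
          proof
            fix w assume w: "w \<in> tg ` J - Bad"
            then obtain v j where vj: "v \<in> S" "j < 2" "w = tg (v, j)" unfolding J_def by auto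
            have wn: "w < n" using unif_targets_range[OF tg n] vj unfolding S_def by auto
            have "(w, x) \<in># msgs tg"
            proof -
              have "(v, j) \<in># filter_mset (\<lambda>(v, j). v < n \<and> vals1 v \<noteq> None \<and> v \<notin> B1 \<and> real m < c3 * ln (real n))
                       (mset_set ({..<n} \<times> {..<2::nat}))"
                using vj mc unfolding S_def by auto
              moreover have "(w, x) = (\<lambda>(v, j). (tg (v, j), the (vals1 v))) (v, j)" using vj unfolding S_def by simp
              ultimately show ?thesis unfolding msgs_def multiset.set_map by (rule image_eqI[rotated])
            qed
            then have "update B2 (vals1, msgs tg) w = Some x"
              using update_recv[OF bnd1[OF tg]] w unfolding Bad_def by auto
            then show "w \<in> H2 - H1" using w wn unfolding H2_def fst2 Bad_def by auto
          qed
          have cnew: "card (tg ` J - Bad) \<le> card H2 - card H1"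
          proof -
            have "card (tg ` J - Bad) \<le> card (H2 - H1)" using new fH2 by (intro card_mono) auto
            also have "\<dots> = card H2 - card H1" using H12 fH1 by (simp add: card_Diff_subset)
            finally show ?thesis .
          qed
          from hE have inv: "Inv n L h m" and ninv: "\<not> Inv n L h (Suc m)"
            and sm: "real (sigma n h m) < real n / 100" by auto
          have cJ: "card J = 2 * card S" unfolding J_def using fS by (simp add: card_cartesian_product)
          have LS: "L \<le> real (card S)" using inv cS unfolding Inv_def s0 s1 by linarith
          have a: "\<not> real (card (tg ` J - Bad)) < 3/5 * card J" using tgC LS sm s1 unfolding C_def by auto
          then have "6 * card S \<le> 5 * card (tg ` J - Bad)" using cJ by linarith
          then have g: "6 * (card H1 - card H0) \<le> 5 * (card H2 - card H1)" using cS cnew by linarith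
          have "Inv n L h (Suc m)"
          proof -
            define a where "a = card H0"
            define b where "b = card H1"
            define c where "c = card H2"
            have bc: "b \<le> c" unfolding b_def c_def using card_mono[OF fH2 H12] .
            obtain N1 where N1: "c = b + N1" using bc le_Suc_ex by blast
            have i1: "b \<le> 6 * (b - a)" and i2: "L \<le> real (b - a)"
              using inv unfolding Inv_def s0 s1 a_def b_def by auto
            have g': "6 * (b - a) \<le> 5 * N1" using g unfolding a_def b_def c_def[symmetric] N1 by simp
            have "b - a \<le> N1" using g' by linarith
            then have l1: "L \<le> real N1" using i2 by linarith
            have l2: "c \<le> 6 * (c - b)" using i1 g' N1 by linarith
            have e1: "sigma n h (Suc m) = c" using s2 c_def by simp
            have e2: "sigma n h (Suc m - 1) = b" using s1 b_def by simp
            show ?thesis unfolding Inv_def e1 e2 using N1 l1 l2 by simp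
          qed
          then show False using ninv by simp
        qed
        then have "measure_pmf.prob (?G (h'' @ [(vals1, msgs tg)])) ?E = 0"
          by (simp only: measure_pmf_zero_iff)
        then show ?thesis by (simp only: order_refl)
      qed
    qed simp
    also have "\<dots> \<le> 2 powr (- L / 5)"
    proof (cases "L \<le> real (card S) \<and> real (card H1) < real n / 100")
      case False
      then have "C = {}" unfolding C_def by auto
      then show ?thesis by simp
    next
      case True
      have fS: "finite S" unfolding S_def by auto
      have fH1: "finite H1" unfolding H1_def by auto
      have SH1: "S \<subseteq> H1" unfolding S_def H1_def by auto
      have cJ: "card J = 2 * card S" unfolding J_def using fS by (simp add: card_cartesian_product)
      have B2: "B2 \<subseteq> {..<n}" "real (card B2) \<le> \<epsilon> * real n" using adv unfolding adv_ok_def B2_def by auto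
      have fB2: "finite B2" using finite_subset[OF B2(1)] by simp
      have fBad: "finite Bad" unfolding Bad_def using fH1 fB2 by auto
      have cBad: "card Bad \<le> card H1 + card B2" unfolding Bad_def by (rule card_Un_le)
      have JI: "J \<subseteq> {..<n} \<times> {..<2}" unfolding J_def S_def by auto
      have cS: "card S \<le> card H1" using card_mono[OF fH1 SH1] .
      have "real (card H1 + card B2) + 3/5 * card J \<le> real n / 8"
      proof -
        have "\<epsilon> * real n \<le> 1/10 * real n" using mult_right_mono[OF eps, of "real n"] by simp
        then have "real (card B2) \<le> real n / 10" using B2(2) by simp
        then show ?thesis using True cJ cS by simp
      qed
      have "C = {tg. real (card (tg ` J - Bad)) < 3/5 * card J}" unfolding C_def using True by auto
      then have "measure_pmf.prob (unif_targets n 2) C \<le> (2 powr (-1/5)) ^ card J"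
        unfolding unif_targets_def
        using few_distinct[OF _ JI n fBad cBad \<open>real (card H1 + card B2) + 3/5 * card J \<le> real n / 8\<close>] by simp
      also have "\<dots> \<le> 2 powr (- L / 5)" using True cJ by (intro pow_bound) simp
      finally show ?thesis by simp
    qed
    finally show "measure_pmf.prob (bind_pmf (?F h'') ?G) ?E \<le> 2 powr (- L / 5)" .
  qed
qed

end

definition r1vals :: "nat \<Rightarrow> (nat \<Rightarrow> nat) \<Rightarrow> nat set \<Rightarrow> (nat \<Rightarrow> bool) \<Rightarrow> vals" where
  "r1vals n inp B coin = (\<lambda>v. if v < n \<and> coin v \<and> v \<notin> B then Some (inp v) else None)"

definition r1msgs :: "nat \<Rightarrow> nat \<Rightarrow> (nat \<Rightarrow> nat) \<Rightarrow> nat set \<Rightarrow> (nat \<Rightarrow> bool) \<Rightarrow> (nat \<times> nat \<Rightarrow> nat) \<Rightarrow> (nat \<times> nat) multiset" where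
  "r1msgs n K inp B coin tg = image_mset (\<lambda>(u, j). (tg (u, j), inp u))
          (filter_mset (\<lambda>(u, j). coin u \<and> u \<notin> B) (mset_set ({..<n} \<times> {..<K})))"

lemma round1_alt: "round1 n c1 c2 inp B =
  bind_pmf (Pi_pmf {..<n} False (\<lambda>_. bernoulli_pmf (c1 * ln (real n) / real n))) (\<lambda>coin.
     map_pmf (\<lambda>tg. (r1vals n inp B coin, r1msgs n (nat \<lceil>c2 * ln (real n)\<rceil>) inp B coin tg))
       (unif_targets n (nat \<lceil>c2 * ln (real n)\<rceil>)))"
  unfolding round1_def r1vals_def r1msgs_def ..

context
  fixes n :: nat and c1 c2 c3 :: real and inp :: "nat \<Rightarrow> nat" and adv :: adversary
begin

lemma exec2_eq:
  "XC n c1 c2 c3 inp adv 2 =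
    bind_pmf (Pi_pmf {..<n} False (\<lambda>_. bernoulli_pmf (c1 * ln (real n) / real n))) (\<lambda>coin.
    bind_pmf (unif_targets n (nat \<lceil>c2 * ln (real n)\<rceil>)) (\<lambda>tg.
    map_pmf (\<lambda>st. [init_state n inp,
       (r1vals n inp (adv 1 [init_state n inp]) coin, r1msgs n (nat \<lceil>c2 * ln (real n)\<rceil>) inp (adv 1 [init_state n inp]) coin tg), st])
    (iter_round n c3 1 (adv 2 [init_state n inp])
       (r1vals n inp (adv 1 [init_state n inp]) coin, r1msgs n (nat \<lceil>c2 * ln (real n)\<rceil>) inp (adv 1 [init_state n inp]) coin tg))))"
  by (simp add: numeral_2_eq_2 round1_alt bind_map_pmf map_bind_pmf bind_assoc_pmf bind_return_pmf map_pmf_comp)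

lemma first_bound:
  assumes n: "n > 0" and adv: "adv_ok n \<epsilon> adv" and eps: "\<epsilon> \<le> 1/10" and L: "L > 0"
    and c2: "c2 > 0" and hL1: "L \<le> 3/5 * (c2 * ln (real n))"
    and hL2: "L \<le> 3/5 * real (nat \<lfloor>real n / 100\<rfloor>)"
  shows "measure_pmf.prob (XC n c1 c2 c3 inp adv 2)
     {h. nonempty n h \<and> real (sigma n h 0) < real n / 100 \<and> \<not> Inv n L h 1}
     \<le> 2 powr (- L / 5)"
proof -
  let ?E = "{h. nonempty n h \<and> real (sigma n h 0) < real n / 100 \<and> \<not> Inv n L h 1}"
  define K where "K = nat \<lceil>c2 * ln (real n)\<rceil>"
  define M where "M = nat \<lfloor>real n / 100\<rfloor>"
  define B1 where "B1 = adv 1 [init_state n inp]"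
  define B2 where "B2 = adv 2 [init_state n inp]"
  have lnn: "ln (real n) \<ge> 0" using n by simp
  have K1: "real K \<ge> c2 * ln (real n)" unfolding K_def by linarith
  have "real K > 0" using K1 hL1 L by linarith
  then have K1': "K \<ge> 1" by simp
  show ?thesis unfolding exec2_eq
  proof (rule prob_bind_le)
    fix coin assume coin: "coin \<in> set_pmf (Pi_pmf {..<n} False (\<lambda>_. bernoulli_pmf (c1 * ln (real n) / real n)))"
    define vals0 where "vals0 = r1vals n inp B1 coin"
    define Mg where "Mg = r1msgs n K inp B1 coin"
    define X where "X = {a. \<exists>v<n. vals0 v = Some a}"
    define x where "x = Max X"
    define H0 where "H0 = {v. v < n \<and> vals0 v = Some x}"
    define J where "J = H0 \<times> {..<K}"
    have fH0: "finite H0" unfolding H0_def by auto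
    have fJ: "finite J" unfolding J_def using fH0 by auto
    have cJ: "card J = card H0 * K" unfolding J_def using fH0 by (simp add: card_cartesian_product)
    obtain J' where J'J: "J' \<subseteq> J" and cJ': "card J' = min (card J) M"
      using obtain_subset_with_card_n[of "min (card J) M" J] by auto
    define Bad where "Bad = H0 \<union> B2"
    define C where "C = {tg::nat\<times>nat\<Rightarrow>nat. (\<exists>v<n. vals0 v \<noteq> None) \<and> real (card H0) < real n / 100 \<and>
                          real (card (tg ` J' - Bad)) < 3/5 * card J'}"
    have fX: "finite X"
    proof (rule finite_subset)
      show "X \<subseteq> inp ` {..<n}" unfolding X_def vals0_def r1vals_def by (auto split: if_splits)
    qed auto
    have H0pos_if: "card H0 \<ge> 1" if ne: "\<exists>v<n. vals0 v \<noteq> None"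
    proof -
      have "X \<noteq> {}" using ne unfolding X_def by auto
      then have "x \<in> X" unfolding x_def using fX by (intro Max_in)
      then have "H0 \<noteq> {}" unfolding X_def H0_def by auto
      then show "card H0 \<ge> 1" using fH0 by (simp add: Suc_le_eq card_gt_0_iff)
    qed
    have J'H0_if: "card H0 \<le> card J'" if sm: "real (card H0) < real n / 100"
    proof -
      have H0M: "card H0 \<le> M" using sm unfolding M_def by linarith
      show ?thesis using cJ' cJ H0M K1' by (simp add: min_def)
    qed
    have J'L_if: "L \<le> 3/5 * real (card J')" if H0pos: "card H0 \<ge> 1"
    proof (cases "card J \<le> M")
      case True
      then have "card J' = card H0 * K" using cJ' cJ by simp
      moreover have "K \<le> card H0 * K" using mult_le_mono1[OF H0pos, of K] by simp
      then have "real K \<le> real (card H0 * K)" by (simp only: of_nat_le_iff)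
      ultimately show ?thesis using hL1 K1 by linarith
    next
      case False
      then show ?thesis using cJ' hL2 unfolding M_def by simp
    qed
    have st1_set: "(vals0, Mg tg) \<in> set_pmf (round1 n c1 c2 inp B1)" if "tg \<in> set_pmf (unif_targets n K)" for tg
      using that coin unfolding round1_alt vals0_def Mg_def K_def by auto
    have bnd1: "bnd x (vals0, Mg tg)" if "tg \<in> set_pmf (unif_targets n K)" for tg
      using round1_bnd[OF st1_set[OF that]] unfolding x_def X_def by simp
    have "measure_pmf.prob (bind_pmf (unif_targets n K) (\<lambda>tg. map_pmf (\<lambda>st. [init_state n inp, (vals0, Mg tg), st])
             (iter_round n c3 1 B2 (vals0, Mg tg)))) ?E \<le> measure_pmf.prob (unif_targets n K) C + 0"
    proof (rule prob_bind_le2)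
      fix tg assume tg: "tg \<in> set_pmf (unif_targets n K)" and tgC: "tg \<notin> C"
      let ?G = "map_pmf (\<lambda>st. [init_state n inp, (vals0, Mg tg), st]) (iter_round n c3 1 B2 (vals0, Mg tg))"
      have "set_pmf ?G \<inter> ?E = {}"
      proof (rule ccontr)
        assume "set_pmf ?G \<inter> ?E \<noteq> {}"
        then obtain h where hG: "h \<in> set_pmf ?G" and hE: "h \<in> ?E" by blast
        obtain st2 where h: "h = [init_state n inp, (vals0, Mg tg), st2]"
          and st2: "st2 \<in> set_pmf (iter_round n c3 1 B2 (vals0, Mg tg))"
          using hG by auto
        have fst2: "fst st2 = update B2 (vals0, Mg tg)"
          using set_iter_round[OF st2] by auto
        define H1 where "H1 = {v. v < n \<and> fst st2 v = Some x}"
        have xh: "x_star n h = x" unfolding x_star_def h x_def X_def by simp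
        have s0: "sigma n h 0 = card H0" unfolding sigma_def H0_def xh unfolding h by simp
        have s1: "sigma n h 1 = card H1" unfolding sigma_def H1_def xh unfolding h by simp
        have ne: "\<exists>v<n. vals0 v \<noteq> None" using hE unfolding nonempty_def h by simp
        have H0pos: "card H0 \<ge> 1" using H0pos_if ne .
        have fH1: "finite H1" unfolding H1_def by auto
        have H01: "H0 \<subseteq> H1"
          unfolding H0_def H1_def fst2 using update_keep[OF bnd1[OF tg]] by auto
        have new: "tg ` J' - Bad \<subseteq> H1 - H0"
        proof
          fix w assume w: "w \<in> tg ` J' - Bad"
          then obtain u j where uj: "u \<in> H0" "j < K" "w = tg (u, j)" using J'J unfolding J_def by auto
          have u: "u < n" "coin u" "u \<notin> B1" "inp u = x"
            using uj(1) unfolding H0_def vals0_def r1vals_def by (auto split: if_splits)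
          have wn: "w < n" using unif_targets_range[OF tg n u(1) uj(2)] uj by simp
          have "(w, x) \<in># Mg tg"
          proof -
            have "(u, j) \<in># filter_mset (\<lambda>(u, j). coin u \<and> u \<notin> B1) (mset_set ({..<n} \<times> {..<K}))"
              using u uj by auto
            moreover have "(w, x) = (\<lambda>(u, j). (tg (u, j), inp u)) (u, j)" using u uj by simp
            ultimately show ?thesis unfolding Mg_def r1msgs_def multiset.set_map by (rule image_eqI[rotated])
          qed
          then have "update B2 (vals0, Mg tg) w = Some x"
            using update_recv[OF bnd1[OF tg]] w unfolding Bad_def by auto
          then show "w \<in> H1 - H0" using w wn unfolding H1_def fst2 Bad_def by auto
        qed
        have cnew: "card (tg ` J' - Bad) \<le> card H1 - card H0"
        proof -
          have "card (tg ` J' - Bad) \<le> card (H1 - H0)" using new fH1 by (intro card_mono) auto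
          also have "\<dots> = card H1 - card H0" using H01 fH0 by (simp add: card_Diff_subset)
          finally show ?thesis .
        qed
        from hE have ninv: "\<not> Inv n L h 1" and sm: "real (sigma n h 0) < real n / 100" by auto
        have a: "\<not> real (card (tg ` J' - Bad)) < 3/5 * card J'" using tgC ne sm s0 unfolding C_def by auto
        have J'H0: "card H0 \<le> card J'" using J'H0_if sm s0 by simp
        have J'L: "L \<le> 3/5 * real (card J')" using J'L_if H0pos .
        have "Inv n L h 1"
        proof -
          define b where "b = card H0"
          define c where "c = card H1"
          have bc: "b \<le> c" unfolding b_def c_def using card_mono[OF fH1 H01] .
          obtain N1 where N1: "c = b + N1" using bc le_Suc_ex by blast
          have g: "3 * card J' \<le> 5 * N1" using a cnew N1 unfolding b_def c_def by linarith
          have l1: "L \<le> real N1" using g J'L by linarith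
          have l2: "c \<le> 6 * (c - b)" using g J'H0 N1 unfolding b_def by linarith
          have e1: "sigma n h 1 = c" using s1 c_def by simp
          have e2: "sigma n h (1 - 1) = b" using s0 b_def by simp
          show ?thesis unfolding Inv_def e1 e2 using N1 l1 l2 by simp
        qed
        then show False using ninv by simp
      qed
      then have "measure_pmf.prob ?G ?E = 0" by (simp only: measure_pmf_zero_iff)
      then show "measure_pmf.prob ?G ?E \<le> 0" by (simp only: order_refl)
    qed simp
    also have "\<dots> \<le> 2 powr (- L / 5)"
    proof (cases "(\<exists>v<n. vals0 v \<noteq> None) \<and> real (card H0) < real n / 100")
      case False
      then have "C = {}" unfolding C_def by auto
      then show ?thesis by simp
    next
      case True
      have H0pos: "card H0 \<ge> 1" using H0pos_if True by blast
      have B2: "B2 \<subseteq> {..<n}" "real (card B2) \<le> \<epsilon> * real n" using adv unfolding adv_ok_def B2_def by auto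
      have fB2: "finite B2" using finite_subset[OF B2(1)] by simp
      have fBad: "finite Bad" unfolding Bad_def using fH0 fB2 by auto
      have cBad: "card Bad \<le> card H0 + card B2" unfolding Bad_def by (rule card_Un_le)
      have JI: "J' \<subseteq> {..<n} \<times> {..<K}" using J'J unfolding J_def H0_def by auto
      have J'M: "real (card J') \<le> real n / 100" using cJ' unfolding M_def by linarith
      have "real (card H0 + card B2) + 3/5 * card J' \<le> real n / 8"
      proof -
        have "\<epsilon> * real n \<le> 1/10 * real n" using mult_right_mono[OF eps, of "real n"] by simp
        then have "real (card B2) \<le> real n / 10" using B2(2) by simp
        then show ?thesis using True J'M by simp
      qed
      have "C = {tg. real (card (tg ` J' - Bad)) < 3/5 * card J'}" unfolding C_def using True by auto
      then have "measure_pmf.prob (unif_targets n K) C \<le> (2 powr (-1/5)) ^ card J'"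
        unfolding unif_targets_def
        using few_distinct[OF _ JI n fBad cBad \<open>real (card H0 + card B2) + 3/5 * card J' \<le> real n / 8\<close>] by simp
      also have "\<dots> \<le> 2 powr (- L / 5)" using J'L_if[OF H0pos] L by (intro pow_bound) simp
      finally show ?thesis by simp
    qed
    finally show "measure_pmf.prob (bind_pmf (unif_targets n (nat \<lceil>c2 * ln (real n)\<rceil>)) (\<lambda>tg. map_pmf (\<lambda>st. [init_state n inp,
       (r1vals n inp (adv 1 [init_state n inp]) coin, r1msgs n (nat \<lceil>c2 * ln (real n)\<rceil>) inp (adv 1 [init_state n inp]) coin tg), st])
    (iter_round n c3 1 (adv 2 [init_state n inp])
       (r1vals n inp (adv 1 [init_state n inp]) coin, r1msgs n (nat \<lceil>c2 * ln (real n)\<rceil>) inp (adv 1 [init_state n inp]) coin tg)))) ?E \<le> 2 powr (- L / 5)"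
      unfolding K_def vals0_def Mg_def B1_def B2_def .
  qed
qed

end

lemma prob_mono_support:
  assumes "\<And>x. x \<in> set_pmf p \<Longrightarrow> x \<in> A \<Longrightarrow> x \<in> B"
  shows "measure_pmf.prob p A \<le> measure_pmf.prob p B"
proof -
  have "measure_pmf.prob p A = measure_pmf.prob p (A \<inter> set_pmf p)"
    by (simp add: measure_Int_set_pmf)
  also have "\<dots> \<le> measure_pmf.prob p B"
    using assms by (intro measure_pmf.finite_measure_mono) auto
  finally show ?thesis .
qed

context
  fixes n :: nat and c1 c2 c3 :: real and inp :: "nat \<Rightarrow> nat" and adv :: adversary
begin

lemma exec_step:
  assumes "h \<in> set_pmf (XC n c1 c2 c3 inp adv m)" "1 \<le> j" "Suc j < length h"
  shows "\<exists>B. fst (h ! Suc j) = update B (h ! j)"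
  using assms
proof (induction m arbitrary: h)
  case 0
  then show ?case using exec_length[OF 0(1)] by simp
next
  case (Suc m)
  then obtain h' st where h': "h' \<in> set_pmf (XC n c1 c2 c3 inp adv m)" and h: "h = h' @ [st]"
    and st: "st \<in> set_pmf (if m = 0 then round1 n c1 c2 inp (adv 1 h')
          else iter_round n c3 m (adv (Suc m) (butlast h')) (last h'))"
    by (auto simp: exec_set_Suc)
  have lh': "length h' = Suc m" using exec_length[OF h'] .
  show ?case
  proof (cases "Suc j < length h'")
    case True
    then show ?thesis using Suc.IH[OF h' Suc.prems(2) True] h by (simp add: nth_append)
  next
    case False
    then have j: "j = m" using Suc.prems lh' h by simp
    then have m0: "m \<noteq> 0" using Suc.prems by simp
    have "h' \<noteq> []" using lh' by auto
    then have "last h' = h' ! m" using lh' by (simp add: last_conv_nth)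
    moreover have "fst st = update (adv (Suc m) (butlast h')) (last h')"
    proof -
      have st': "st \<in> set_pmf (iter_round n c3 m (adv (Suc m) (butlast h')) (last h'))" using st m0 by simp
      have "\<exists>M. st = (update (adv (Suc m) (butlast h')) (last h'), M)" using set_iter_round[OF st'] by blast
      then show ?thesis by auto
    qed
    ultimately show ?thesis using h lh' j by (auto simp: nth_append)
  qed
qed

lemma sigma_mono:
  assumes h: "h \<in> set_pmf (XC n c1 c2 c3 inp adv m)" and j: "1 \<le> j" "Suc j < length h"
  shows "sigma n h (j - 1) \<le> sigma n h j"
proof -
  obtain B where B: "fst (h ! Suc j) = update B (h ! j)" using exec_step[OF h j] by blast
  have b: "bnd (x_star n h) (h ! j)" using exec_bnd[OF h j(1)] j by simp
  have "{v. v < n \<and> fst (h ! (j - 1 + 1)) v = Some (x_star n h)} \<subseteq> {v. v < n \<and> fst (h ! (j + 1)) v = Some (x_star n h)}"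
    using j update_keep[OF b] B by auto
  then show ?thesis unfolding sigma_def by (intro card_mono) auto
qed

lemma butlast_facts:
  assumes "Suc (Suc k) < length h" "2 \<le> length h"
  shows "x_star n (butlast h) = x_star n h" "sigma n (butlast h) k = sigma n h k"
    "nonempty n (butlast h) = nonempty n h"
proof -
  have l: "length (butlast h) = length h - 1" by simp
  show xs: "x_star n (butlast h) = x_star n h" unfolding x_star_def using assms by (simp add: nth_butlast)
  show "sigma n (butlast h) k = sigma n h k" unfolding sigma_def xs using assms by (simp add: nth_butlast)
  show "nonempty n (butlast h) = nonempty n h" unfolding nonempty_def using assms by (simp add: nth_butlast)
qed

lemma bad_bound:
  assumes n: "n > 0" and adv: "adv_ok n \<epsilon> adv" and eps: "\<epsilon> \<le> 1/10" and L: "L > 0"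
    and c2: "c2 > 0" and hL1: "L \<le> 3/5 * (c2 * ln (real n))"
    and hL2: "L \<le> 3/5 * real (nat \<lfloor>real n / 100\<rfloor>)"
    and t: "1 \<le> t" and tc: "real (t - 1) < c3 * ln (real n)"
  shows "measure_pmf.prob (XC n c1 c2 c3 inp adv (Suc t))
     {h. nonempty n h \<and> real (sigma n h (t - 1)) < real n / 100 \<and> \<not> Inv n L h t}
     \<le> real t * 2 powr (- L / 5)"
  using t tc
proof (induction t rule: dec_induct)
  case base
  then show ?case using first_bound[OF n adv eps L c2 hL1 hL2] by (simp add: numeral_2_eq_2)
next
  case (step m)
  let ?B = "\<lambda>k. {h. nonempty n h \<and> real (sigma n h (k - 1)) < real n / 100 \<and> \<not> Inv n L h k}"
  let ?E = "{h. nonempty n h \<and> real (sigma n h m) < real n / 100 \<and> Inv n L h m \<and> \<not> Inv n L h (Suc m)}"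
  have mc: "real m < c3 * ln (real n)" using step.prems by simp
  have IH: "measure_pmf.prob (XC n c1 c2 c3 inp adv (Suc m)) (?B m) \<le> real m * 2 powr (- L / 5)"
    using step.IH step.prems by simp
have A1: "measure_pmf.prob (XC n c1 c2 c3 inp adv (Suc (Suc m))) (?B (Suc m))
      \<le> measure_pmf.prob (XC n c1 c2 c3 inp adv (Suc (Suc m))) ({h. butlast h \<in> ?B m} \<union> ?E)"
  proof (rule prob_mono_support)
    fix h assume h: "h \<in> set_pmf (XC n c1 c2 c3 inp adv (Suc (Suc m)))" and hB: "h \<in> ?B (Suc m)"
    have lh: "length h = Suc (Suc (Suc m))" using exec_length[OF h] .
    show "h \<in> {h. butlast h \<in> ?B m} \<union> ?E"
    proof (cases "Inv n L h m")
      case True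
      then have "h \<in> ?E" using hB by simp
      then show ?thesis by (rule UnI2)
    next
      case False
      have mono: "sigma n h (m - 1) \<le> sigma n h m" using sigma_mono[OF h] step.hyps lh by simp
      have b1: "sigma n (butlast h) (m - 1) = sigma n h (m - 1)" using butlast_facts(2)[of "m - 1" h] lh by simp
      have b2: "sigma n (butlast h) m = sigma n h m" using butlast_facts(2)[of m h] lh by simp
      have b3: "nonempty n (butlast h) = nonempty n h" using butlast_facts(3)[of m h] lh by simp
      have "Inv n L (butlast h) m = Inv n L h m" unfolding Inv_def b1 b2 by simp
      then have "butlast h \<in> ?B m" using hB False mono b1 b3 by simp
      then show ?thesis by simp
    qed
  qed
  have A2: "measure_pmf.prob (XC n c1 c2 c3 inp adv (Suc (Suc m))) ({h. butlast h \<in> ?B m} \<union> ?E) \<le> measure_pmf.prob (XC n c1 c2 c3 inp adv (Suc (Suc m))) {h. butlast h \<in> ?B m}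
                 + measure_pmf.prob (XC n c1 c2 c3 inp adv (Suc (Suc m))) ?E"
    by (rule measure_Un_le) auto
  have A3: "measure_pmf.prob (XC n c1 c2 c3 inp adv (Suc (Suc m))) {h. butlast h \<in> ?B m}
      = measure_pmf.prob (XC n c1 c2 c3 inp adv (Suc m)) (?B m)"
    using prob_exec_butlast[of n c1 c2 c3 inp adv "Suc m" "\<lambda>h. h \<in> ?B m"] unfolding Collect_mem_eq .
  have A4: "measure_pmf.prob (XC n c1 c2 c3 inp adv (Suc (Suc m))) ?E \<le> 2 powr (- L / 5)"
    using step_bound[OF step.hyps(1) n mc adv eps L] .
  have A5: "real (Suc m) * 2 powr (- L / 5) = real m * 2 powr (- L / 5) + 2 powr (- L / 5)"
    by (simp add: distrib_right)
  show ?case using A1 A2 A3 A4 A5 IH by linarith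
qed

end

lemma ln_small:
  fixes K C a :: real
  assumes a: "a > 0" and K: "K \<ge> 0" and C: "C \<ge> 0"
  shows "\<exists>N. \<forall>x\<ge>N. K * ln x + C \<le> x powr a"
proof -
  define b where "b = a / 2"
  define B where "B = 2 * K / a + C + 1"
  have b: "b > 0" unfolding b_def using a by simp
  have B1: "B \<ge> 1" unfolding B_def using a K C by simp
  show ?thesis
  proof (intro exI allI impI)
    fix x :: real assume x: "max 1 (B powr (1 / b)) \<le> x"
    have x1: "x \<ge> 1" using x by simp
    define u where "u = x powr b"
    have "B = (B powr (1 / b)) powr b" using b B1 by (simp add: powr_powr)
    also have "\<dots> \<le> x powr b" using x b B1 by (intro powr_mono2) auto
    finally have uB: "u \<ge> B" unfolding u_def .
    have lnx: "ln x \<le> u / b" unfolding u_def using ln_powr_bound[OF x1 b] .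
    have xa: "x powr a = u * u" unfolding u_def b_def using x1 by (simp add: powr_add[symmetric])
    have "K * ln x + C \<le> K * (u / b) + C" using mult_left_mono[OF lnx K] by simp
    also have "\<dots> = (2 * K / a) * u + C" unfolding b_def by simp
    also have "\<dots> \<le> (2 * K / a) * u + (C + 1) * u"
    proof -
      have "(C + 1) * 1 \<le> (C + 1) * u" using uB B1 C by (intro mult_left_mono) auto
      then show ?thesis by simp
    qed
    also have "\<dots> = B * u" unfolding B_def by (simp add: algebra_simps)
    also have "\<dots> \<le> u * u" using uB B1 by (intro mult_right_mono) auto
    finally show "K * ln x + C \<le> x powr a" using xa by simp
  qed
qed

theorem lemma13:
  fixes \<epsilon> c1 c2 c3 :: real and K :: nat
  assumes "0 \<le> \<epsilon>" and "\<epsilon> \<le> 1/10" and "c1 > 0" and "c2 > 0" and "c3 > 0"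
  shows "\<exists>\<rho> \<alpha> c d :: real. 0 < \<rho> \<and> \<rho> < 1 \<and> \<alpha> > 0 \<and> c > 0 \<and> d > 0 \<and>
    (\<exists>n0::nat. \<forall>n \<ge> n0. \<forall>inp adv t.
       (\<forall>v<n. inp v < n ^ K) \<longrightarrow> adv_ok n \<epsilon> adv \<longrightarrow>
       1 \<le> t \<longrightarrow> t \<le> nat \<lceil>c3 * ln (real n)\<rceil> \<longrightarrow>
       measure_pmf.prob (exec n c1 c2 c3 inp adv (t + 1))
         {h. (\<exists>v<n. fst (h ! 1) v \<noteq> None) \<and>
             real (sigma n h (t - 1)) < \<rho> * real n \<and>
             real (sigma n h t) < max ((1 + \<alpha>) * real (sigma n h (t - 1))) (c * ln (real n))}
       \<le> real n powr (- d))"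
proof -
  note eps = assms(2) and c2 = assms(4) and c3 = assms(5)
  define c where "c = 3/5 * c2"
  define d where "d = c * ln 2 / 10"
  have c: "c > 0" unfolding c_def using c2 by simp
  have d: "d > 0" unfolding d_def using c by simp
  obtain N1 where N1: "\<And>x. x \<ge> N1 \<Longrightarrow> (500 * c / 3) * ln x + 100 \<le> x powr 1"
    using ln_small[of 1 "500 * c / 3" 100] c by auto
  obtain N2 where N2: "\<And>x. x \<ge> N2 \<Longrightarrow> c3 * ln x + 1 \<le> x powr d"
    using ln_small[of d c3 1] d c3 by auto
  define n0 where "n0 = nat \<lceil>max (max N1 N2) 2\<rceil>"
  have main: "measure_pmf.prob (exec n c1 c2 c3 inp adv (t + 1))
         {h. (\<exists>v<n. fst (h ! 1) v \<noteq> None) \<and>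
             real (sigma n h (t - 1)) < 1/100 * real n \<and>
             real (sigma n h t) < max ((1 + 1/5) * real (sigma n h (t - 1))) (c * ln (real n))}
       \<le> real n powr (- d)"
    if n: "n \<ge> n0" and adv: "adv_ok n \<epsilon> adv" and t: "1 \<le> t" "t \<le> nat \<lceil>c3 * ln (real n)\<rceil>" for n inp adv t
  proof -
    have n2: "real n \<ge> 2" using n unfolding n0_def by linarith
    have nN1: "real n \<ge> N1" and nN2: "real n \<ge> N2" using n unfolding n0_def by linarith+
    have npos: "n > 0" using n2 by simp
    have lnpos: "ln (real n) > 0" using n2 by simp
    define L where "L = c * ln (real n)"
    have L: "L > 0" unfolding L_def using c lnpos by simp
    have hL1: "L \<le> 3/5 * (c2 * ln (real n))" unfolding L_def c_def by simp
    have hL2: "L \<le> 3/5 * real (nat \<lfloor>real n / 100\<rfloor>)"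
    proof -
      have "(500 * c / 3) * ln (real n) + 100 \<le> real n" using N1[OF nN1] n2 by simp
      then have "L \<le> 3/5 * (real n / 100 - 1)" unfolding L_def by (simp add: field_simps)
      moreover have "real n / 100 - 1 \<le> real (nat \<lfloor>real n / 100\<rfloor>)" by linarith
      then have "3/5 * (real n / 100 - 1) \<le> 3/5 * real (nat \<lfloor>real n / 100\<rfloor>)" by (rule mult_left_mono) auto
      ultimately show ?thesis by (rule order_trans)
    qed
    have tc: "real (t - 1) < c3 * ln (real n)" using t by linarith
    have tle: "real t \<le> c3 * ln (real n) + 1" using t c3 lnpos by linarith
    have bb: "measure_pmf.prob (exec n c1 c2 c3 inp adv (Suc t))
     {h. nonempty n h \<and> real (sigma n h (t - 1)) < real n / 100 \<and> \<not> Inv n L h t}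
     \<le> real t * 2 powr (- L / 5)"
      by (rule bad_bound[OF npos adv eps L c2 hL1 hL2 t(1) tc])
    have sub: "{h. (\<exists>v<n. fst (h ! 1) v \<noteq> None) \<and>
             real (sigma n h (t - 1)) < 1/100 * real n \<and>
             real (sigma n h t) < max ((1 + 1/5) * real (sigma n h (t - 1))) (c * ln (real n))}
         \<subseteq> {h. nonempty n h \<and> real (sigma n h (t - 1)) < real n / 100 \<and> \<not> Inv n L h t}"
    proof
      fix h assume h: "h \<in> {h. (\<exists>v<n. fst (h ! 1) v \<noteq> None) \<and>
             real (sigma n h (t - 1)) < 1/100 * real n \<and>
             real (sigma n h t) < max ((1 + 1/5) * real (sigma n h (t - 1))) (c * ln (real n))}"
      have "\<not> Inv n L h t"
      proof
        assume inv: "Inv n L h t"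
        define a where "a = sigma n h (t - 1)"
        define b where "b = sigma n h t"
        have i1: "b \<le> 6 * (b - a)" and i2: "L \<le> real (b - a)" using inv unfolding Inv_def a_def b_def by auto
        have ab: "a < b" using i2 L by linarith
        obtain N where N: "b = a + N" using ab less_imp_le le_Suc_ex by blast
        have "a + N \<le> 6 * N" using i1 N by simp
        then have r1: "(1 + 1/5) * real a \<le> real b" using N by simp
        have r2: "c * ln (real n) \<le> real b" using i2 N unfolding L_def by simp
        show False using h r1 r2 unfolding a_def b_def by auto
      qed
      then show "h \<in> {h. nonempty n h \<and> real (sigma n h (t - 1)) < real n / 100 \<and> \<not> Inv n L h t}"
        using h unfolding nonempty_def by auto
    qed
    have dl: "2 powr (- L / 5) = real n powr (- 2 * d)"
      unfolding L_def d_def powr_def using npos by (simp add: field_simps)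
    have "measure_pmf.prob (exec n c1 c2 c3 inp adv (t + 1))
         {h. (\<exists>v<n. fst (h ! 1) v \<noteq> None) \<and>
             real (sigma n h (t - 1)) < 1/100 * real n \<and>
             real (sigma n h t) < max ((1 + 1/5) * real (sigma n h (t - 1))) (c * ln (real n))}
        \<le> measure_pmf.prob (exec n c1 c2 c3 inp adv (t + 1))
     {h. nonempty n h \<and> real (sigma n h (t - 1)) < real n / 100 \<and> \<not> Inv n L h t}"
      using sub by (intro measure_pmf.finite_measure_mono) auto
    also have "\<dots> \<le> real t * real n powr (- 2 * d)" using bb dl by simp
    also have "\<dots> \<le> (c3 * ln (real n) + 1) * real n powr (- 2 * d)"
      using tle by (intro mult_right_mono) auto
    also have "\<dots> \<le> real n powr d * real n powr (- 2 * d)"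
      using N2[OF nN2] by (intro mult_right_mono) auto
    also have "\<dots> = real n powr (- d)" by (simp add: powr_add[symmetric])
    finally show ?thesis .
  qed
  show ?thesis
    apply (rule exI[of _ "1/100"], rule exI[of _ "1/5"], rule exI[of _ c], rule exI[of _ d])
    using c d main by (intro conjI exI[of _ n0]) auto
qed

end
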